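(* Let $n\in\mathbb{N}$, let $X$ be a non-empty perfect Polish space, let $\pi$ be a balanced scheme of size $n$, and let $\mathcal{V}\subseteq\mathcal{U}(\pi)$ be a non-empty open subset of $\mathcal{K}(X)$. Then there exists a balanced scheme $\pi'$ of size $n+1$ which is consistent with $\pi$ and satisfies $\mathcal{U}(\pi')\subseteq\mathcal{V}$.
   Context: $\mathcal{K}(X)$ is the space of non-empty compact subsets of $X$ with the Hausdorff metric. Fix an onto map $\Psi$ from the positive odd integers to the set $\mathbb{N}^{<\omega}$ of finite sequences of natural numbers such that $\Psi(m)$ has at most $m$ coordinates for every odd $m$. Given positive integers $a_1,a_2,\dots$, let $\mathcal{I}_m=\prod_{k=1}^m\{1,\dots,a_k\}$. For $n\ge1$ and $(a_1,\dots,a_{2n-1})$ define $\Phi=\Phi_{a_1\dots a_{2n-1}}$ on $\{2k-1:1\le k\le n\}$ by $\Phi(2k-1)=\Psi(2k-1)$ if $\Psi(2k-1)\in\bigcup_{m=1}^{2k-1}\mathcal{I}_m$, and $\Phi(2k-1)=(1)\in\mathcal{I}_1$ otherwise. For $n\ge1$, a balanced scheme of size $n$ is a pair consisting of positive integers $(a_1,\dots,a_{2n})$ and non-empty open sets $U_{i_1\dots i_k}\subseteq X$ for $(i_1,\dots,i_k)\in\mathcal{I}_k$, $1\le k\le 2n$, such that there are positive reals $b_k$ with: (1) $a_1\ge2$ and $a_k\ge(k-1)a_1\cdots a_{k-1}$ for $2\le k\le 2n$; (2) $\overline{U_{i_1\dots i_k}}\subseteq U_{i_1\dots i_{k-1}}$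 for $2\le k\le 2n$; (3) $\operatorname{diam}U_{i_1\dots i_k}\le b_k$ for $1\le k\le 2n$; (4) $\operatorname{dist}(U_{i_1\dots i_k},U_{j_1\dots j_k})>2b_k$ whenever $(i_1,\dots,i_k)\ne(j_1,\dots,j_k)\in\mathcal{I}_k$, $1\le k\le 2n$; (5) with $\Phi=\Phi_{a_1\dots a_{2n-1}}$: if $k<2n$ is odd, $U_{i_1\dots i_k}\subseteq U_{\Phi(k)}$ and $U_{j_1\dots j_k}\not\subseteq U_{\Phi(k)}$, then for all $s\ne t$ in $\{1,\dots,a_{k+1}\}$, $\operatorname{dist}(U_{i_1\dots i_k s},U_{i_1\dots i_k t})>\operatorname{diam}\bigl(\bigcup_{j_{k+1}=1}^{a_{k+1}}U_{j_1\dots j_k j_{k+1}}\bigr)$. The balanced scheme of size $0$ is $(\emptyset,\emptyset)$. For a balanced scheme $\pi$ of size $n\ge1$, $\mathcal{U}(\pi)=\{K\in\mathcal{K}(X): K\subseteq\bigcup_{(i_1,\dots,i_{2n})\in\mathcal{I}_{2n}}U_{i_1\dots i_{2n}}$ and $K\cap U_{i_1\dots i_{2n}}\ne\emptyset$ for all $(i_1,\dots,i_{2n})\in\mathcal{I}_{2n}\}$; for size $0$, $\mathcal{U}(\pi)=\mathcal{K}(X)$. A balanced scheme $\pi'$ of size $n+1$ is consistent with a balanced scheme $\pi$ of size $n$ if $a_k(\pi')=a_k(\pi)$ and $U_{i_1\dots i_k}(\pi')=U_{i_1\dots i_k}(\pi)$ for all $k\le 2n$ and $(i_1,\dots,i_k)\in\mathcal{I}_k$.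 *)

theory Defs
  imports "HOL-Analysis.Analysis"
begin

text \<open>Finite sequences are lists; indices of a_k start at 1.
  I a m = prod_{k=1}^m {1..a_k}.\<close>
definition Iset :: "(nat \<Rightarrow> nat) \<Rightarrow> nat \<Rightarrow> nat list set" where
  "Iset a m = {xs. length xs = m \<and> (\<forall>j<m. 1 \<le> xs ! j \<and> xs ! j \<le> a (j + 1))}"

definition Phi :: "(nat \<Rightarrow> nat list) \<Rightarrow> (nat \<Rightarrow> nat) \<Rightarrow> nat \<Rightarrow> nat list" where
  "Phi Psi a k = (if (\<exists>m\<in>{1..k}. Psi k \<in> Iset a m) then Psi k else [1])"

definition hausdorff_dist :: "'a::metric_space set \<Rightarrow> 'a set \<Rightarrow> real" where
  "hausdorff_dist A B = max (SUP x\<in>A. infdist x B) (SUP y\<in>B. infdist y A)"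

definition Kspace :: "'a::metric_space set set" where
  "Kspace = {K. compact K \<and> K \<noteq> {}}"

definition K_open :: "'a::metric_space set set \<Rightarrow> bool" where
  "K_open V \<longleftrightarrow> V \<subseteq> Kspace \<and>
     (\<forall>K\<in>V. \<exists>e>0. \<forall>L\<in>Kspace. hausdorff_dist K L < e \<longrightarrow> L \<in> V)"

text \<open>A balanced scheme of size n is represented by (a, U); only a_1..a_{2n}
  and U on I_k (1 <= k <= 2n) are relevant. For n = 0 every pair represents
  the empty scheme.\<close>
definition balanced ::
  "(nat \<Rightarrow> nat list) \<Rightarrow> nat \<Rightarrow> (nat \<Rightarrow> nat) \<Rightarrow> (nat list \<Rightarrow> 'a::metric_space set) \<Rightarrow> bool" where
  "balanced Psi n a U \<longleftrightarrow> n = 0 \<or>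
    ((\<forall>k\<in>{1..2*n}. 0 < a k) \<and>
     (\<forall>k\<in>{1..2*n}. \<forall>s\<in>Iset a k. open (U s) \<and> U s \<noteq> {}) \<and>
     (\<exists>b :: nat \<Rightarrow> real. (\<forall>k\<in>{1..2*n}. 0 < b k) \<and>
        a 1 \<ge> 2 \<and>
        (\<forall>k\<in>{2..2*n}. a k \<ge> (k - 1) * (\<Prod>j\<in>{1..k-1}. a j)) \<and>
        (\<forall>k\<in>{2..2*n}. \<forall>s\<in>Iset a k. closure (U s) \<subseteq> U (butlast s)) \<and>
        (\<forall>k\<in>{1..2*n}. \<forall>s\<in>Iset a k. bounded (U s) \<and> diameter (U s) \<le> b k) \<and>
        (\<forall>k\<in>{1..2*n}. \<forall>s\<in>Iset a k. \<forall>t\<in>Iset a k. s \<noteq> t \<longrightarrow> setdist (U s) (U t) > 2 * b k) \<and>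
        (\<forall>k. odd k \<and> k < 2*n \<longrightarrow>
           (\<forall>s\<in>Iset a k. \<forall>t\<in>Iset a k.
              U s \<subseteq> U (Phi Psi a k) \<and> \<not> U t \<subseteq> U (Phi Psi a k) \<longrightarrow>
              (\<forall>p\<in>{1..a (k+1)}. \<forall>q\<in>{1..a (k+1)}. p \<noteq> q \<longrightarrow>
                 setdist (U (s @ [p])) (U (s @ [q]))
                   > diameter (\<Union>r\<in>{1..a (k+1)}. U (t @ [r])))))))"

definition Uscheme ::
  "nat \<Rightarrow> (nat \<Rightarrow> nat) \<Rightarrow> (nat list \<Rightarrow> 'a::metric_space set) \<Rightarrow> 'a set set" where
  "Uscheme n a U = (if n = 0 then Kspace else
     {K \<in> Kspace. K \<subseteq> (\<Union>s\<in>Iset a (2*n). U s) \<and> (\<forall>s\<in>Iset a (2*n). K \<inter> U s \<noteq> {})})"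

definition consistent ::
  "nat \<Rightarrow> (nat \<Rightarrow> nat) \<Rightarrow> (nat list \<Rightarrow> 'a set) \<Rightarrow> (nat \<Rightarrow> nat) \<Rightarrow> (nat list \<Rightarrow> 'a set) \<Rightarrow> bool" where
  "consistent n a U a' U' \<longleftrightarrow>
     (\<forall>k\<in>{1..2*n}. a' k = a k) \<and> (\<forall>k\<in>{1..2*n}. \<forall>s\<in>Iset a k. U' s = U s)"

end

theory Submission
  imports Defs
begin

lemma Iset_length: "s \<in> Iset a k \<Longrightarrow> length s = k"
  by (simp add: Iset_def)

lemma Iset_0: "Iset a 0 = {[]}"
  by (auto simp: Iset_def)

lemma Iset_snoc: "s @ [i] \<in> Iset a (Suc k) \<longleftrightarrow> s \<in> Iset a k \<and> 1 \<le> i \<and> i \<le> a (Suc k)"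
  unfolding Iset_def
  by (auto simp: nth_append less_Suc_eq split: if_splits)

lemma Iset_Suc_decomp: "v \<in> Iset a (Suc k) \<Longrightarrow> v = butlast v @ [last v] \<and> butlast v \<in> Iset a k \<and> 1 \<le> last v \<and> last v \<le> a (Suc k)"
proof -
  assume v: "v \<in> Iset a (Suc k)"
  then have "v \<noteq> []" by (auto simp: Iset_def)
  then have e: "v = butlast v @ [last v]" by simp
  with v have "butlast v @ [last v] \<in> Iset a (Suc k)" by simp
  with e show ?thesis using Iset_snoc by metis
qed

lemma Iset_Suc: "Iset a (Suc k) = (\<lambda>(s,i). s @ [i]) ` (Iset a k \<times> {1..a (Suc k)})"
proof
  show "Iset a (Suc k) \<subseteq> (\<lambda>(s,i). s @ [i]) ` (Iset a k \<times> {1..a (Suc k)})"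
  proof
    fix v assume "v \<in> Iset a (Suc k)"
    from Iset_Suc_decomp[OF this] show "v \<in> (\<lambda>(s,i). s @ [i]) ` (Iset a k \<times> {1..a (Suc k)})"
      by (intro image_eqI[of _ _ "(butlast v, last v)"]) auto
  qed
  show "(\<lambda>(s,i). s @ [i]) ` (Iset a k \<times> {1..a (Suc k)}) \<subseteq> Iset a (Suc k)"
    using Iset_snoc by auto
qed

lemma finite_Iset: "finite (Iset a k)"
  by (induction k) (auto simp: Iset_0 Iset_Suc)

lemma Iset_cong: "(\<And>j. 1 \<le> j \<Longrightarrow> j \<le> k \<Longrightarrow> a' j = a j) \<Longrightarrow> Iset a' k = Iset a k"
  unfolding Iset_def by (auto simp: Suc_le_eq)

lemma Phi_cong: "(\<And>j. 1 \<le> j \<Longrightarrow> j \<le> k \<Longrightarrow> a' j = a j) \<Longrightarrow> Phi Psi a' k = Phi Psi a k"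
proof -
  assume h: "\<And>j. 1 \<le> j \<Longrightarrow> j \<le> k \<Longrightarrow> a' j = a j"
  have "\<And>m. m \<in> {1..k} \<Longrightarrow> Iset a' m = Iset a m"
    by (rule Iset_cong) (use h in auto)
  then show ?thesis unfolding Phi_def by auto
qed

lemma Phi_len: "1 \<le> k \<Longrightarrow> length (Phi Psi a k) \<le> k \<and> Phi Psi a k \<noteq> []"
  unfolding Phi_def by (auto simp: Iset_def)

lemma choose_inj:
  assumes "finite N" "\<And>u. u \<in> N \<Longrightarrow> infinite (Op u)"
  shows "\<exists>c. inj_on c N \<and> (\<forall>u\<in>N. c u \<in> Op u)"
  using assms
proof (induction N rule: finite_induct)
  case empty then show ?case by auto
next
  case (insert x N)
  then obtain c where c: "inj_on c N" "\<forall>u\<in>N. c u \<in> Op u" by auto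
  have "infinite (Op x)" using insert by auto
  then have "infinite (Op x - c ` N)" using insert(1) by (meson finite_Diff2 finite_imageI)
  then obtain y where y: "y \<in> Op x" "y \<notin> c ` N"
    by (metis Diff_iff finite.emptyI subsetI subset_antisym empty_iff)
  show ?case
    by (rule exI[of _ "c(x := y)"]) (use c y insert(2) in \<open>auto simp: inj_on_def\<close>)
qed

lemma finite_pos:
  assumes "finite N" "\<And>u. u \<in> N \<Longrightarrow> \<exists>e>0. \<forall>e'. 0 < e' \<and> e' \<le> e \<longrightarrow> P u e'"
  shows "\<exists>e>(0::real). \<forall>u\<in>N. \<forall>e'. 0 < e' \<and> e' \<le> e \<longrightarrow> P u e'"
  using assms
proof (induction N rule: finite_induct)
  case empty then show ?case by (auto intro: exI[of _ 1])
next
  case (insert x N)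
  then obtain e where e: "e > 0" "\<forall>u\<in>N. \<forall>e'. 0 < e' \<and> e' \<le> e \<longrightarrow> P u e'" by auto
  have "\<exists>e>0. \<forall>e'. 0 < e' \<and> e' \<le> e \<longrightarrow> P x e'" using insert.prems by simp
  then obtain e2 where e2: "e2 > 0" "\<forall>e'. 0 < e' \<and> e' \<le> e2 \<longrightarrow> P x e'" by blast
  show ?case
    by (rule exI[of _ "min e e2"]) (use e e2 in auto)
qed

lemma infinite_open_perfect:
  fixes Op :: "'a::{metric_space,perfect_space} set"
  assumes "open Op" "x \<in> Op"
  shows "infinite Op"
proof -
  obtain \<epsilon> where "\<epsilon> > 0" "ball x \<epsilon> \<subseteq> Op" using assms open_contains_ball by blast
  moreover have "infinite (UNIV \<inter> ball x \<epsilon>)"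
    using islimpt_UNIV[of x] \<open>\<epsilon> > 0\<close> unfolding islimpt_eq_infinite_ball by blast
  ultimately show ?thesis by (metis finite_subset inf_top_left)
qed

lemma setdist_balls:
  assumes "0 < r"
  shows "dist a b - 2*r \<le> setdist (ball a r) (ball b r)"
proof (rule le_setdistI)
  show "ball a r \<noteq> {}" "ball b r \<noteq> {}" using assms by auto
  fix x y assume "x \<in> ball a r" "y \<in> ball b r"
  then show "dist a b - 2*r \<le> dist x y"
    using dist_triangle[of a b x] dist_triangle[of x b y] by (auto simp: dist_commute)
qed

lemma diameter_in_ball:
  assumes "S \<subseteq> ball c \<rho>" "0 < \<rho>"
  shows "bounded S \<and> diameter S \<le> 2*\<rho>"
proof
  show "bounded S" using assms bounded_ball bounded_subset by blast
  show "diameter S \<le> 2*\<rho>"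
  proof (cases "S = {}")
    case True then show ?thesis using assms by simp
  next
    case False
    have "\<And>x y. x \<in> S \<Longrightarrow> y \<in> S \<Longrightarrow> dist x y \<le> 2*\<rho>"
    proof -
      fix x y assume "x \<in> S" "y \<in> S"
      then have "dist c x < \<rho>" "dist c y < \<rho>" using assms by auto
      then show "dist x y \<le> 2*\<rho>" using dist_triangle[of x y c] by (auto simp: dist_commute)
    qed
    then show ?thesis using False unfolding diameter_def by (auto intro!: cSUP_least)
  qed
qed

lemma closure_ball_sub:
  fixes c :: "'a::metric_space"
  shows "closure (ball c r) \<subseteq> cball c r"
  by (rule closure_minimal[OF ball_subset_cball closed_cball])

lemma targets:
  assumes "finite F" "\<forall>z\<in>F. \<exists>s\<in>S. z \<in> G s" "\<forall>s\<in>S. G s \<inter> F \<noteq> {}" "card F \<le> A"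
  shows "\<exists>x. (\<forall>s\<in>S. \<forall>i\<in>{1..A}. x s i \<in> G s \<inter> F) \<and> (\<forall>z\<in>F. \<exists>s\<in>S. \<exists>i\<in>{1..A}. x s i = z)"
proof -
  have "\<forall>s. \<exists>xs. set xs = G s \<inter> F \<and> distinct xs"
    using assms(1) by (meson finite_Int finite_distinct_list)
  then obtain xs where xs: "\<And>s. set (xs s) = G s \<inter> F \<and> distinct (xs s)" by metis
  have len: "length (xs s) \<le> A" for s
  proof -
    have "length (xs s) = card (G s \<inter> F)" using xs[of s] distinct_card by metis
    also have "\<dots> \<le> card F" using assms(1) by (simp add: card_mono)
    finally show ?thesis using assms(4) by simp
  qed
  define x where "x s i = xs s ! min (i - 1) (length (xs s) - 1)" for s i
  have 1: "\<forall>s\<in>S. \<forall>i\<in>{1..A}. x s i \<in> G s \<inter> F"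
  proof (intro ballI)
    fix s i assume "s \<in> S" "i \<in> {1..A}"
    then have "xs s \<noteq> []" using assms(3) xs[of s] by (metis set_empty)
    then have "min (i - 1) (length (xs s) - 1) < length (xs s)" by (cases "xs s") (auto simp: min_def)
    then show "x s i \<in> G s \<inter> F" unfolding x_def using xs[of s] nth_mem by metis
  qed
  have 2: "\<forall>z\<in>F. \<exists>s\<in>S. \<exists>i\<in>{1..A}. x s i = z"
  proof
    fix z assume "z \<in> F"
    then obtain s where s: "s \<in> S" "z \<in> G s" using assms(2) by auto
    then have "z \<in> set (xs s)" using xs[of s] \<open>z \<in> F\<close> by auto
    then obtain k where k: "k < length (xs s)" "xs s ! k = z" by (metis in_set_conv_nth)
    have "min k (length (xs s) - 1) = k" using k(1) by simp
    then have "x s (k+1) = z" unfolding x_def using k by simp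
    moreover have "k + 1 \<in> {1..A}" using k len[of s] by auto
    ultimately show "\<exists>s\<in>S. \<exists>i\<in>{1..A}. x s i = z" using s by blast
  qed
  from 1 2 show ?thesis by blast
qed

lemma sep_pos:
  fixes f :: "'b \<Rightarrow> 'a::metric_space"
  assumes "finite N" "inj_on f N"
  shows "\<exists>m>0. \<forall>v\<in>N. \<forall>w\<in>N. v \<noteq> w \<longrightarrow> m < dist (f v) (f w)"
proof -
  define Q where "Q vw e' = (fst vw \<noteq> snd vw \<longrightarrow> e' < dist (f (fst vw)) (f (snd vw)))" for vw and e' :: real
  have "\<exists>m>(0::real). \<forall>vw\<in>N\<times>N. \<forall>e'. 0 < e' \<and> e' \<le> m \<longrightarrow> Q vw e'"
  proof (rule finite_pos)
    show "finite (N \<times> N)" using assms by simp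
    fix vw assume vw: "vw \<in> N \<times> N"
    show "\<exists>e1>0. \<forall>e'. 0 < e' \<and> e' \<le> e1 \<longrightarrow> Q vw e'"
    proof (cases "fst vw = snd vw")
      case True
      then have "\<forall>e'. 0 < e' \<and> e' \<le> 1 \<longrightarrow> Q vw e'" by (simp add: Q_def)
      then show ?thesis using zero_less_one by blast
    next
      case False
      have "fst vw \<in> N" "snd vw \<in> N" using vw by (simp_all add: mem_Times_iff)
      then have "f (fst vw) \<noteq> f (snd vw)" using assms(2) False by (metis inj_onD)
      then have pos: "0 < dist (f (fst vw)) (f (snd vw))" by simp
      then have "\<forall>e'. 0 < e' \<and> e' \<le> dist (f (fst vw)) (f (snd vw)) / 2 \<longrightarrow> Q vw e'"
        by (simp add: Q_def)
      moreover have "0 < dist (f (fst vw)) (f (snd vw)) / 2" using pos by simp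
      ultimately show ?thesis by blast
    qed
  qed
  then obtain m where mpos: "m > 0" and H: "\<forall>vw\<in>N\<times>N. \<forall>e'. 0 < e' \<and> e' \<le> m \<longrightarrow> Q vw e'" by blast
  have "\<forall>v\<in>N. \<forall>w\<in>N. v \<noteq> w \<longrightarrow> m < dist (f v) (f w)"
  proof (intro ballI impI)
    fix v w assume "v \<in> N" "w \<in> N" "v \<noteq> w"
    then have "Q (v,w) m" using H mpos by blast
    then show "m < dist (f v) (f w)" using \<open>v \<noteq> w\<close> by (simp add: Q_def)
  qed
  then show ?thesis using mpos by blast
qed

theorem lemma4p10:
  fixes Psi :: "nat \<Rightarrow> nat list"
    and n :: nat
    and a :: "nat \<Rightarrow> nat"
    and U :: "nat list \<Rightarrow> 'a::{polish_space, perfect_space} set"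
    and V :: "'a set set"
  assumes Psi_onto: "{xs. \<forall>x\<in>set xs. 0 < x} \<subseteq> Psi ` {m. odd m}"
    and Psi_len: "\<forall>m. odd m \<longrightarrow> length (Psi m) \<le> m"
    and bal: "balanced Psi n a U"
    and V_ne: "V \<noteq> {}"
    and V_open: "K_open V"
    and V_sub: "V \<subseteq> Uscheme n a U"
  shows "\<exists>a' U'. balanced Psi (Suc n) a' U' \<and> consistent n a U a' U'
                 \<and> Uscheme (Suc n) a' U' \<subseteq> V"
proof -
  obtain b where
    apos: "\<forall>k\<in>{1..2*n}. 0 < a k" and
    Uon: "\<forall>k\<in>{1..2*n}. \<forall>s\<in>Iset a k. open (U s) \<and> U s \<noteq> {}" and
    bpos: "\<forall>k\<in>{1..2*n}. 0 < b k" and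
    a1: "n \<noteq> 0 \<longrightarrow> a 1 \<ge> 2" and
    c1: "\<forall>k\<in>{2..2*n}. a k \<ge> (k - 1) * (\<Prod>j\<in>{1..k-1}. a j)" and
    c2: "\<forall>k\<in>{2..2*n}. \<forall>s\<in>Iset a k. closure (U s) \<subseteq> U (butlast s)" and
    c3: "\<forall>k\<in>{1..2*n}. \<forall>s\<in>Iset a k. bounded (U s) \<and> diameter (U s) \<le> b k" and
    c4: "\<forall>k\<in>{1..2*n}. \<forall>s\<in>Iset a k. \<forall>t\<in>Iset a k. s \<noteq> t \<longrightarrow> setdist (U s) (U t) > 2 * b k" and
    c5: "\<forall>k. odd k \<and> k < 2*n \<longrightarrow>
           (\<forall>s\<in>Iset a k. \<forall>t\<in>Iset a k.
              U s \<subseteq> U (Phi Psi a k) \<and> \<not> U t \<subseteq> U (Phi Psi a k) \<longrightarrow>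
              (\<forall>p\<in>{1..a (k+1)}. \<forall>q\<in>{1..a (k+1)}. p \<noteq> q \<longrightarrow>
                 setdist (U (s @ [p])) (U (s @ [q]))
                   > diameter (\<Union>r\<in>{1..a (k+1)}. U (t @ [r]))))"
  proof (cases "n = 0")
    case True then show ?thesis by (intro that[of "\<lambda>_. 1"]) auto
  next
    case False
    show ?thesis using bal False unfolding balanced_def
      apply (elim disjE conjE exE)
       apply simp
      apply (rule that)
      apply (assumption | rule impI, assumption)+
      done
  qed
  from V_ne V_open obtain K e where KV: "K \<in> V" and e: "e > 0"
    and eV: "\<forall>L\<in>Kspace. hausdorff_dist K L < e \<longrightarrow> L \<in> V"
    unfolding K_open_def by blast
  have Kc: "compact K" "K \<noteq> {}" using KV V_open by (auto simp: K_open_def Kspace_def)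
  have KU: "K \<in> Uscheme n a U" using KV V_sub by blast
  define I0 where "I0 = Iset a (2*n)"
  define W where "W s = (if s = [] then UNIV else U s)" for s
  have I0len: "\<And>s. s \<in> I0 \<Longrightarrow> length s = 2*n" unfolding I0_def by (simp add: Iset_length)
  have W_open: "\<forall>s\<in>I0. open (W s)"
  proof
    fix s assume s: "s \<in> I0"
    show "open (W s)"
    proof (cases "n = 0")
      case True then show ?thesis using s by (simp add: W_def I0_def Iset_0)
    next
      case False
      then have "s \<noteq> []" "2*n \<in> {1..2*n}" using I0len[OF s] by auto
      then show ?thesis using Uon s by (auto simp: W_def I0_def)
    qed
  qed
  have KW: "K \<subseteq> (\<Union>s\<in>I0. W s) \<and> (\<forall>s\<in>I0. K \<inter> W s \<noteq> {})"
  proof (cases "n = 0")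
    case True then show ?thesis using Kc by (simp add: W_def I0_def Iset_0)
  next
    case False
    then have ne: "\<And>s. s \<in> I0 \<Longrightarrow> s \<noteq> []" using I0len by fastforce
    have "K \<subseteq> (\<Union>s\<in>I0. U s) \<and> (\<forall>s\<in>I0. K \<inter> U s \<noteq> {})"
      using KU False by (simp add: Uscheme_def I0_def)
    then show ?thesis using ne by (auto simp: W_def)
  qed
  obtain F0 where F0: "F0 \<subseteq> K" "finite F0" "K \<subseteq> (\<Union>z\<in>F0. ball z (e/4))"
  proof (rule compactE_image[OF Kc(1), of K "\<lambda>z. ball z (e/4)"])
    show "K \<subseteq> (\<Union>z\<in>K. ball z (e/4))" using e by force
  qed auto
  have "\<forall>s\<in>I0. \<exists>z. z \<in> K \<inter> W s" using KW by blast
  then obtain p where p: "\<forall>s\<in>I0. p s \<in> K \<inter> W s" by metis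
  define F where "F = F0 \<union> p ` I0"
  have finI0: "finite I0" unfolding I0_def by (rule finite_Iset)
  have finF: "finite F" using F0 finI0 by (simp add: F_def)
  have FK: "F \<subseteq> K" using F0 p by (auto simp: F_def)
  have F1: "\<forall>z\<in>F. \<exists>s\<in>I0. z \<in> W s" using FK KW by blast
  have F2: "\<forall>s\<in>I0. W s \<inter> F \<noteq> {}" using p by (auto simp: F_def)
  define P0 where "P0 = (\<Prod>j\<in>{1..2*n}. a j)"
  define A where "A = 2*n*P0 + card F + 2"
  define B where "B = (2*n+1)*P0*A + 1"
  define a' where "a' k = (if k \<le> 2*n then a k else if k = Suc (2*n) then A else B)" for k
  have a'eq: "\<And>j. j \<le> 2*n \<Longrightarrow> a' j = a j" by (simp add: a'_def)
  have a'1: "a' (Suc (2*n)) = A" by (simp add: a'_def)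
  have a'2: "a' (Suc (Suc (2*n))) = B" by (simp add: a'_def)
  have Iseq: "\<And>k. k \<le> 2*n \<Longrightarrow> Iset a' k = Iset a k" by (rule Iset_cong) (simp add: a'eq)
  obtain xt where xt1: "\<forall>s\<in>I0. \<forall>i\<in>{1..A}. xt s i \<in> W s \<inter> F"
    and xt2: "\<forall>z\<in>F. \<exists>s\<in>I0. \<exists>i\<in>{1..A}. xt s i = z"
    using targets[OF finF F1 F2, of A] by (auto simp: A_def)
  define I1 where "I1 = Iset a' (Suc (2*n))"
  have I1dec: "\<And>u. u \<in> I1 \<Longrightarrow> butlast u \<in> I0 \<and> last u \<in> {1..A} \<and> u = butlast u @ [last u]"
    using Iset_Suc_decomp Iseq a'1 unfolding I1_def I0_def by fastforce
  have I1snoc: "\<And>s i. s \<in> I0 \<Longrightarrow> i \<in> {1..A} \<Longrightarrow> s @ [i] \<in> I1"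
    using Iset_snoc Iseq a'1 unfolding I1_def I0_def by fastforce
  have I1len: "\<And>u. u \<in> I1 \<Longrightarrow> length u = Suc (2*n)" unfolding I1_def by (simp add: Iset_length)
  define x where "x u = xt (butlast u) (last u)" for u
  have xK: "\<forall>u\<in>I1. x u \<in> K \<inter> W (butlast u)" using xt1 I1dec FK by (auto simp: x_def)
  have xcov: "\<forall>z\<in>F. \<exists>u\<in>I1. x u = z"
  proof
    fix z assume "z \<in> F"
    then obtain s i where "s \<in> I0" "i \<in> {1..A}" "xt s i = z" using xt2 by blast
    then show "\<exists>u\<in>I1. x u = z" using I1snoc by (intro bexI[of _ "s @ [i]"]) (auto simp: x_def)
  qed
  have finI1: "finite I1" unfolding I1_def by (rule finite_Iset)
  obtain c where cinj: "inj_on c I1" and cin: "\<forall>u\<in>I1. c u \<in> ball (x u) (e/8) \<inter> W (butlast u)"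
  proof -
    have "\<exists>c. inj_on c I1 \<and> (\<forall>u\<in>I1. c u \<in> ball (x u) (e/8) \<inter> W (butlast u))"
    proof (rule choose_inj[OF finI1])
      fix u assume u: "u \<in> I1"
      show "infinite (ball (x u) (e/8) \<inter> W (butlast u))"
        by (rule infinite_open_perfect[of _ "x u"]) (use u xK W_open I1dec e in auto)
    qed
    then show ?thesis using that by blast
  qed
  have cne: "\<And>u v. u \<in> I1 \<Longrightarrow> v \<in> I1 \<Longrightarrow> u \<noteq> v \<Longrightarrow> 0 < dist (c u) (c v)"
    using cinj by (auto simp: inj_on_def)
  obtain R where Rpos: "R > 0" and
    Rsep: "\<forall>u\<in>I1. \<forall>v\<in>I1. u \<noteq> v \<longrightarrow> 6*R < dist (c u) (c v)" and
    Rin: "\<forall>u\<in>I1. ball (c u) (2*R) \<subseteq> W (butlast u)" and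
    Re: "R \<le> e/8"
  proof -
    have "\<exists>e0>(0::real). \<forall>uv\<in>I1\<times>I1. \<forall>e'. 0 < e' \<and> e' \<le> e0 \<longrightarrow>
        ((fst uv \<noteq> snd uv \<longrightarrow> 6*e' < dist (c (fst uv)) (c (snd uv))) \<and>
         ball (c (fst uv)) (2*e') \<subseteq> W (butlast (fst uv)) \<and> e' \<le> e/8)"
    proof (rule finite_pos)
      show "finite (I1 \<times> I1)" using finI1 by simp
      fix uv assume uv: "uv \<in> I1 \<times> I1"
      obtain u v where uv': "uv = (u,v)" "u \<in> I1" "v \<in> I1" using uv by auto
      have "open (W (butlast u))" "c u \<in> W (butlast u)" using W_open I1dec cin uv' by auto
      then obtain \<epsilon> where eps: "\<epsilon> > 0" "ball (c u) \<epsilon> \<subseteq> W (butlast u)" using open_contains_ball by blast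
      define e0 where "e0 = min (min (\<epsilon>/2) (e/8)) (if u \<noteq> v then dist (c u) (c v) / 12 else 1)"
      have "e0 > 0" using eps e cne[of u v] uv' unfolding e0_def by simp
      moreover have "\<forall>e'. 0 < e' \<and> e' \<le> e0 \<longrightarrow>
        ((fst uv \<noteq> snd uv \<longrightarrow> 6*e' < dist (c (fst uv)) (c (snd uv))) \<and>
         ball (c (fst uv)) (2*e') \<subseteq> W (butlast (fst uv)) \<and> e' \<le> e/8)"
      proof (intro allI impI conjI)
        fix e' assume e': "0 < e' \<and> e' \<le> e0"
        have m1: "e0 \<le> \<epsilon>/2" "e0 \<le> e/8" by (simp_all add: e0_def)
        show "fst uv \<noteq> snd uv \<Longrightarrow> 6*e' < dist (c (fst uv)) (c (snd uv))"
        proof -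
          assume "fst uv \<noteq> snd uv"
          then have "u \<noteq> v" using uv' by simp
          then have "e0 \<le> dist (c u) (c v) / 12" by (simp add: e0_def)
          moreover have "0 < dist (c u) (c v)" using cne uv' \<open>u \<noteq> v\<close> by blast
          ultimately show ?thesis using e' uv' by simp
        qed
        have "ball (c u) (2*e') \<subseteq> ball (c u) \<epsilon>" using e' m1 by (intro subset_ball) simp
        then show "ball (c (fst uv)) (2*e') \<subseteq> W (butlast (fst uv))" using eps uv' by auto
        show "e' \<le> e/8" using e' m1 by simp
      qed
      ultimately show "\<exists>e1>0. \<forall>e'. 0 < e' \<and> e' \<le> e1 \<longrightarrow>
        ((fst uv \<noteq> snd uv \<longrightarrow> 6*e' < dist (c (fst uv)) (c (snd uv))) \<and>
         ball (c (fst uv)) (2*e') \<subseteq> W (butlast (fst uv)) \<and> e' \<le> e/8)"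
        by (intro exI[of _ e0] conjI)
    qed
    then obtain e0 where "e0 > 0" and H: "\<forall>uv\<in>I1\<times>I1. \<forall>e'. 0 < e' \<and> e' \<le> e0 \<longrightarrow>
        ((fst uv \<noteq> snd uv \<longrightarrow> 6*e' < dist (c (fst uv)) (c (snd uv))) \<and>
         ball (c (fst uv)) (2*e') \<subseteq> W (butlast (fst uv)) \<and> e' \<le> e/8)" by blast
    define R0 where "R0 = min e0 (e/8)"
    have R0: "0 < R0 \<and> R0 \<le> e0" using \<open>e0 > 0\<close> e by (auto simp: R0_def)
    have H2: "\<And>u v. u \<in> I1 \<Longrightarrow> v \<in> I1 \<Longrightarrow> (u \<noteq> v \<longrightarrow> 6*R0 < dist (c u) (c v)) \<and>
         ball (c u) (2*R0) \<subseteq> W (butlast u)"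
    proof -
      fix u v assume "u \<in> I1" "v \<in> I1"
      then have "(u,v) \<in> I1 \<times> I1" by simp
      from H[rule_format, OF this, of R0] R0 show "(u \<noteq> v \<longrightarrow> 6*R0 < dist (c u) (c v)) \<and>
         ball (c u) (2*R0) \<subseteq> W (butlast u)" by simp
    qed
    show ?thesis
      by (rule that[of R0]) (use R0 H2 in \<open>auto simp: R0_def\<close>)
  qed
  define Uo where "Uo s = (if s = [] then UNIV else if length s \<le> 2*n then U s else ball (c s) R)" for s
  define Ph where "Ph = Phi Psi a' (Suc (2*n))"
  define S where "S = {u\<in>I1. Uo u \<subseteq> Uo Ph}"
  define I2 where "I2 = Iset a' (Suc (Suc (2*n)))"
  have I2dec: "\<And>v. v \<in> I2 \<Longrightarrow> butlast v \<in> I1 \<and> last v \<in> {1..B} \<and> v = butlast v @ [last v]"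
    using Iset_Suc_decomp a'2 unfolding I2_def I1_def by fastforce
  have I2snoc: "\<And>u i. u \<in> I1 \<Longrightarrow> i \<in> {1..B} \<Longrightarrow> u @ [i] \<in> I2"
    using Iset_snoc a'2 unfolding I2_def I1_def by fastforce
  have I2len: "\<And>v. v \<in> I2 \<Longrightarrow> length v = Suc (Suc (2*n))" unfolding I2_def by (simp add: Iset_length)
  have finI2: "finite I2" unfolding I2_def by (rule finite_Iset)
  define SL where "SL = {v\<in>I2. butlast v \<in> S}"
  define TL where "TL = {v\<in>I2. butlast v \<notin> S}"
  have finSL: "finite SL" "finite TL" using finI2 by (auto simp: SL_def TL_def)
  obtain d1 where d1inj: "inj_on d1 SL" and d1in: "\<forall>v\<in>SL. d1 v \<in> ball (c (butlast v)) (R/2)"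
  proof -
    have "\<exists>d. inj_on d SL \<and> (\<forall>v\<in>SL. d v \<in> ball (c (butlast v)) (R/2))"
    proof (rule choose_inj[OF finSL(1)])
      fix v assume "v \<in> SL"
      show "infinite (ball (c (butlast v)) (R/2))"
        by (rule infinite_open_perfect[of _ "c (butlast v)"]) (use Rpos in auto)
    qed
    then show ?thesis using that by blast
  qed
  obtain m where mpos: "m > 0" and msep: "\<forall>v\<in>SL. \<forall>w\<in>SL. v \<noteq> w \<longrightarrow> m < dist (d1 v) (d1 w)"
    using sep_pos[OF finSL(1) d1inj] by blast
  define \<rho> where "\<rho> = min (R/2) (m/8)"
  have \<rho>pos: "\<rho> > 0" using Rpos mpos by (simp add: \<rho>_def)
  obtain d2 where d2inj: "inj_on d2 TL" and d2in: "\<forall>v\<in>TL. d2 v \<in> ball (c (butlast v)) \<rho>"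
  proof -
    have "\<exists>d. inj_on d TL \<and> (\<forall>v\<in>TL. d v \<in> ball (c (butlast v)) \<rho>)"
    proof (rule choose_inj[OF finSL(2)])
      fix v assume "v \<in> TL"
      show "infinite (ball (c (butlast v)) \<rho>)"
        by (rule infinite_open_perfect[of _ "c (butlast v)"]) (use \<rho>pos in auto)
    qed
    then show ?thesis using that by blast
  qed
  define d where "d v = (if butlast v \<in> S then d1 v else d2 v)" for v
  have dball: "\<forall>v\<in>I2. dist (c (butlast v)) (d v) < R/2"
  proof
    fix v assume v: "v \<in> I2"
    show "dist (c (butlast v)) (d v) < R/2"
    proof (cases "butlast v \<in> S")
      case True then show ?thesis using d1in v by (auto simp: d_def SL_def)
    next
      case False
      then have "dist (c (butlast v)) (d v) < \<rho>" using d2in v by (auto simp: d_def TL_def)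
      then show ?thesis by (simp add: \<rho>_def)
    qed
  qed
  have dT: "\<forall>v\<in>I2. butlast v \<notin> S \<longrightarrow> dist (c (butlast v)) (d v) < \<rho>"
    using d2in by (auto simp: d_def TL_def)
  have dinj: "inj_on d I2"
  proof (rule inj_onI)
    fix v w assume v: "v \<in> I2" and w: "w \<in> I2" and eq: "d v = d w"
    show "v = w"
    proof (cases "butlast v = butlast w")
      case True
      show ?thesis
      proof (cases "butlast v \<in> S")
        case True
        then have "v \<in> SL" "w \<in> SL" using v w \<open>butlast v = butlast w\<close> by (auto simp: SL_def)
        moreover have "d1 v = d1 w" using eq True \<open>butlast v = butlast w\<close> by (simp add: d_def)
        ultimately show ?thesis using d1inj by (auto simp: inj_on_def)
      next
        case False
        then have "v \<in> TL" "w \<in> TL" using v w \<open>butlast v = butlast w\<close> by (auto simp: TL_def)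
        moreover have "d2 v = d2 w" using eq False \<open>butlast v = butlast w\<close> by (simp add: d_def)
        ultimately show ?thesis using d2inj by (auto simp: inj_on_def)
      qed
    next
      case False
      have "butlast v \<in> I1" "butlast w \<in> I1" using v w I2dec by auto
      then have "6*R < dist (c (butlast v)) (c (butlast w))" using Rsep False by blast
      moreover have "dist (c (butlast v)) (c (butlast w)) \<le> dist (c (butlast v)) (d v) + dist (d w) (c (butlast w))"
        using dist_triangle[of "c (butlast v)" "c (butlast w)" "d v"] eq by simp
      moreover have "dist (d w) (c (butlast w)) < R/2" using dball w by (simp add: dist_commute)
      ultimately show ?thesis using dball v Rpos by force
    qed
  qed
  obtain m0 where m0pos: "m0 > 0" and m0sep: "\<forall>v\<in>I2. \<forall>w\<in>I2. v \<noteq> w \<longrightarrow> m0 < dist (d v) (d w)"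
    using sep_pos[OF finI2 dinj] by blast
  define r where "r = min (min (m0/6) (R/4)) (m/8)"
  have rpos: "r > 0" using m0pos Rpos mpos by (simp add: r_def)
  have rR: "r \<le> R/4" and rm: "r \<le> m/8" by (simp_all add: r_def)
  have rsep: "\<forall>v\<in>I2. \<forall>w\<in>I2. v \<noteq> w \<longrightarrow> 6*r < dist (d v) (d w)"
  proof (intro ballI impI)
    fix v w assume "v \<in> I2" "w \<in> I2" "v \<noteq> w"
    then have "m0 < dist (d v) (d w)" using m0sep by blast
    moreover have "6*r \<le> m0" by (simp add: r_def)
    ultimately show "6*r < dist (d v) (d w)" by simp
  qed
  define U' where "U' s = (if length s \<le> Suc (2*n) then Uo s else ball (d s) r)" for s
  define b' where "b' k = (if k \<le> 2*n then b k else if k = Suc (2*n) then 2*R else 2*r)" for k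
  have U'old: "\<And>s. 1 \<le> length s \<Longrightarrow> length s \<le> 2*n \<Longrightarrow> U' s = U s"
    by (auto simp: U'_def Uo_def)
  have U'0: "\<And>s. s \<in> I0 \<Longrightarrow> U' s = W s" using I0len by (auto simp: U'_def Uo_def W_def)
  have U'1: "\<And>u. u \<in> I1 \<Longrightarrow> U' u = ball (c u) R"
  proof -
    fix u assume "u \<in> I1"
    then have "length u = Suc (2*n)" using I1len by blast
    then have "u \<noteq> []" by auto
    with \<open>length u = Suc (2*n)\<close> show "U' u = ball (c u) R" by (simp add: U'_def Uo_def)
  qed
  have U'2: "\<And>v. v \<in> I2 \<Longrightarrow> U' v = ball (d v) r" using I2len by (simp add: U'_def)
  have Phlen: "length Ph \<le> Suc (2*n)" "Ph \<noteq> []" using Phi_len[of "Suc (2*n)"] by (auto simp: Ph_def)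
  have U'Ph: "U' Ph = Uo Ph" using Phlen by (simp add: U'_def)
  have Sdef': "\<And>u. u \<in> I1 \<Longrightarrow> u \<in> S \<longleftrightarrow> U' u \<subseteq> U' Ph" using U'Ph I1len by (simp add: S_def U'_def)
  have cons: "consistent n a U a' U'"
    unfolding consistent_def
  proof (intro conjI ballI)
    fix k assume "k \<in> {1..2*n}" then show "a' k = a k" by (simp add: a'eq)
  next
    fix k s assume "k \<in> {1..2*n}" "s \<in> Iset a k" then show "U' s = U s" using U'old Iset_length by force
  qed
  have sub: "Uscheme (Suc n) a' U' \<subseteq> V"
  proof
    fix L assume L: "L \<in> Uscheme (Suc n) a' U'"
    then have LK: "L \<in> Kspace" and Lcov: "L \<subseteq> (\<Union>v\<in>I2. U' v)" and Lmeet: "\<forall>v\<in>I2. L \<inter> U' v \<noteq> {}"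
      by (simp_all add: Uscheme_def I2_def)
    have h1: "\<forall>y\<in>L. infdist y K \<le> e/4"
    proof
      fix y assume "y \<in> L"
      then obtain v where v: "v \<in> I2" "y \<in> U' v" using Lcov by blast
      define u where "u = butlast v"
      have u: "u \<in> I1" using I2dec v unfolding u_def by blast
      have 1: "dist (d v) y < r" using v U'2 by simp
      have 2: "dist (c u) (d v) < R/2" using dball v u_def by simp
      have 3: "dist (x u) (c u) < e/8" using cin u by simp
      have xu: "x u \<in> K" using xK u by blast
      have "dist y (x u) \<le> dist y (d v) + dist (d v) (x u)" by (rule dist_triangle)
      moreover have "dist (d v) (x u) \<le> dist (d v) (c u) + dist (c u) (x u)" by (rule dist_triangle)
      ultimately have "dist y (x u) < e/4" using e 1 2 3 rR Re dist_commute[of y "d v"] dist_commute[of "c u" "d v"] dist_commute[of "c u" "x u"] by linarith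
      then show "infdist y K \<le> e/4" using infdist_le[OF xu, of y] by simp
    qed
    have h2: "\<forall>z\<in>K. infdist z L \<le> e/2"
    proof
      fix z assume "z \<in> K"
      then obtain z0 where z0: "z0 \<in> F0" "dist z0 z < e/4" using F0(3) by auto
      then have "z0 \<in> F" by (simp add: F_def)
      then obtain u where u: "u \<in> I1" "x u = z0" using xcov by blast
      have "1 \<in> {1..B}" by (simp add: B_def)
      then have v: "u @ [1] \<in> I2" using I2snoc u by blast
      then obtain y where y: "y \<in> L" "y \<in> U' (u @ [1])" using Lmeet by blast
      have 1: "dist (d (u@[1])) y < r" using y U'2 v by simp
      have 2: "dist (c u) (d (u@[1])) < R/2" using dball v by force
      have 3: "dist z0 (c u) < e/8" using cin u by auto
      have "dist z y \<le> dist z z0 + dist z0 y" by (rule dist_triangle)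
      moreover have "dist z0 y \<le> dist z0 (c u) + dist (c u) y" by (rule dist_triangle)
      moreover have "dist (c u) y \<le> dist (c u) (d (u@[1])) + dist (d (u@[1])) y" by (rule dist_triangle)
      ultimately have "dist z y < e/2" using e 1 2 3 rR Re z0 dist_commute[of z z0] by linarith
      then show "infdist z L \<le> e/2" using infdist_le[OF y(1), of z] by simp
    qed
    have Lne: "L \<noteq> {}" using LK by (simp add: Kspace_def)
    have "(SUP z\<in>K. infdist z L) \<le> e/2" using h2 Kc(2) by (intro cSUP_least) auto
    moreover have "(SUP y\<in>L. infdist y K) \<le> e/4" using h1 Lne by (intro cSUP_least) auto
    ultimately have "hausdorff_dist K L < e" using e by (simp add: hausdorff_dist_def)
    then show "L \<in> V" using eV LK by blast
  qed
  have kcases: "\<And>k. k \<le> 2*Suc n \<Longrightarrow> k \<le> 2*n \<or> k = Suc (2*n) \<or> k = Suc (Suc (2*n))" by auto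
  have I1eq: "Iset a' (Suc (2*n)) = I1" by (simp add: I1_def)
  have I2eq: "Iset a' (Suc (Suc (2*n))) = I2" by (simp add: I2_def)
  have H1: "\<forall>k\<in>{1..2*Suc n}. 0 < a' k"
  proof
    fix k assume k: "k \<in> {1..2*Suc n}"
    show "0 < a' k"
    proof (cases "k \<le> 2*n")
      case True with k apos show ?thesis by (simp add: a'eq)
    next
      case False then show ?thesis by (simp add: a'_def A_def B_def)
    qed
  qed
  have H2: "\<forall>k\<in>{1..2*Suc n}. \<forall>s\<in>Iset a' k. open (U' s) \<and> U' s \<noteq> {}"
  proof (intro ballI)
    fix k s assume k: "k \<in> {1..2*Suc n}" and s: "s \<in> Iset a' k"
    have ls: "length s = k" using s Iset_length by blast
    consider "k \<le> 2*n" | "k = Suc (2*n)" | "k = Suc (Suc (2*n))" using kcases k by force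
    then show "open (U' s) \<and> U' s \<noteq> {}"
    proof cases
      case 1 then have "s \<in> Iset a k" using s Iseq by simp
      then show ?thesis using Uon 1 k U'old ls by auto
    next
      case 2 then have "s \<in> I1" using s by (simp add: I1_def)
      then show ?thesis using U'1 Rpos by simp
    next
      case 3 then have "s \<in> I2" using s by (simp add: I2_def)
      then show ?thesis using U'2 rpos by simp
    qed
  qed
  have H3: "\<forall>k\<in>{1..2*Suc n}. 0 < b' k"
    using bpos Rpos rpos by (auto simp: b'_def)
  have H4: "a' 1 \<ge> 2"
  proof (cases "n = 0")
    case True then show ?thesis by (simp add: a'_def A_def)
  next
    case False then show ?thesis using a1 by (simp add: a'_def)
  qed
  have Pa': "(\<Prod>j\<in>{1..2*n}. a' j) = P0" unfolding P0_def by (rule prod.cong) (auto simp: a'eq)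
  have H5: "\<forall>k\<in>{2..2*Suc n}. a' k \<ge> (k - 1) * (\<Prod>j\<in>{1..k-1}. a' j)"
  proof
    fix k assume k: "k \<in> {2..2*Suc n}"
    consider "k \<le> 2*n" | "k = Suc (2*n)" | "k = Suc (Suc (2*n))" using kcases k by force
    then show "a' k \<ge> (k - 1) * (\<Prod>j\<in>{1..k-1}. a' j)"
    proof cases
      case 1
      have "(\<Prod>j\<in>{1..k-1}. a' j) = (\<Prod>j\<in>{1..k-1}. a j)" by (rule prod.cong) (use 1 in \<open>auto simp: a'eq\<close>)
      then show ?thesis using c1 k 1 by (simp add: a'eq)
    next
      case 2 then show ?thesis using Pa' by (simp add: a'1 A_def)
    next
      case 3
      have "(\<Prod>j\<in>{1..k-1}. a' j) = P0 * A" using 3 Pa' a'1 by simp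
      moreover have "(k - 1) * (P0 * A) \<le> B" using 3 by (simp add: B_def algebra_simps)
      ultimately show ?thesis using 3 a'2 by simp
    qed
  qed
  have H6: "\<forall>k\<in>{2..2*Suc n}. \<forall>s\<in>Iset a' k. closure (U' s) \<subseteq> U' (butlast s)"
  proof (intro ballI)
    fix k s assume k: "k \<in> {2..2*Suc n}" and s: "s \<in> Iset a' k"
    have ls: "length s = k" using s Iset_length by blast
    consider "k \<le> 2*n" | "k = Suc (2*n)" | "k = Suc (Suc (2*n))" using kcases k by force
    then show "closure (U' s) \<subseteq> U' (butlast s)"
    proof cases
      case 1 then have "s \<in> Iset a k" using s Iseq by simp
      then have "closure (U s) \<subseteq> U (butlast s)" using c2 k 1 by auto
      moreover have "U' s = U s" "U' (butlast s) = U (butlast s)" using U'old ls k 1 by auto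
      ultimately show ?thesis by simp
    next
      case 2 then have su: "s \<in> I1" using s by (simp add: I1_def)
      have "closure (U' s) \<subseteq> cball (c s) R" using U'1[OF su] closure_ball_sub by simp
      also have "\<dots> \<subseteq> ball (c s) (2*R)" using Rpos by (auto simp: subset_eq)
      also have "\<dots> \<subseteq> W (butlast s)" using Rin su by blast
      also have "\<dots> = U' (butlast s)" using U'0 I1dec su by simp
      finally show ?thesis .
    next
      case 3 then have sv: "s \<in> I2" using s by (simp add: I2_def)
      have "closure (U' s) \<subseteq> cball (d s) r" using U'2[OF sv] closure_ball_sub by simp
      also have "\<dots> \<subseteq> ball (c (butlast s)) R"
      proof
        fix y assume "y \<in> cball (d s) r"
        then have "dist (d s) y \<le> r" by simp
        moreover have "dist (c (butlast s)) (d s) < R/2" using dball sv by blast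
        moreover have "dist (c (butlast s)) y \<le> dist (c (butlast s)) (d s) + dist (d s) y" by (rule dist_triangle)
        ultimately have "dist (c (butlast s)) y < R" using rR Rpos by linarith
        then show "y \<in> ball (c (butlast s)) R" by simp
      qed
      also have "\<dots> = U' (butlast s)" using U'1 I2dec sv by simp
      finally show ?thesis .
    qed
  qed
  have H7: "\<forall>k\<in>{1..2*Suc n}. \<forall>s\<in>Iset a' k. bounded (U' s) \<and> diameter (U' s) \<le> b' k"
  proof (intro ballI)
    fix k s assume k: "k \<in> {1..2*Suc n}" and s: "s \<in> Iset a' k"
    have ls: "length s = k" using s Iset_length by blast
    consider "k \<le> 2*n" | "k = Suc (2*n)" | "k = Suc (Suc (2*n))" using kcases k by force
    then show "bounded (U' s) \<and> diameter (U' s) \<le> b' k"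
    proof cases
      case 1 then have "s \<in> Iset a k" using s Iseq by simp
      then show ?thesis using c3 k 1 U'old ls by (auto simp: b'_def)
    next
      case 2 then have su: "s \<in> I1" using s by (simp add: I1_def)
      show ?thesis using diameter_in_ball[of "ball (c s) R" "c s" R] Rpos U'1[OF su] 2 by (simp add: b'_def)
    next
      case 3 then have sv: "s \<in> I2" using s by (simp add: I2_def)
      show ?thesis using diameter_in_ball[of "ball (d s) r" "d s" r] rpos U'2[OF sv] 3 by (simp add: b'_def)
    qed
  qed
  have H8: "\<forall>k\<in>{1..2*Suc n}. \<forall>s\<in>Iset a' k. \<forall>t\<in>Iset a' k. s \<noteq> t \<longrightarrow> setdist (U' s) (U' t) > 2 * b' k"
  proof (intro ballI impI)
    fix k s t assume k: "k \<in> {1..2*Suc n}" and s: "s \<in> Iset a' k" and t: "t \<in> Iset a' k" and st: "s \<noteq> t"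
    have ls: "length s = k" "length t = k" using s t Iset_length by blast+
    consider "k \<le> 2*n" | "k = Suc (2*n)" | "k = Suc (Suc (2*n))" using kcases k by force
    then show "setdist (U' s) (U' t) > 2 * b' k"
    proof cases
      case 1 then have "s \<in> Iset a k" "t \<in> Iset a k" using s t Iseq by simp_all
      then show ?thesis using c4 k 1 U'old ls st by (auto simp: b'_def)
    next
      case 2 then have su: "s \<in> I1" "t \<in> I1" using s t by (simp_all add: I1_def)
      have "6*R < dist (c s) (c t)" using Rsep su st by blast
      moreover have "dist (c s) (c t) - 2*R \<le> setdist (ball (c s) R) (ball (c t) R)" by (rule setdist_balls[OF Rpos])
      ultimately show ?thesis using U'1 su 2 by (simp add: b'_def)
    next
      case 3 then have sv: "s \<in> I2" "t \<in> I2" using s t by (simp_all add: I2_def)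
      have "6*r < dist (d s) (d t)" using rsep sv st by blast
      moreover have "dist (d s) (d t) - 2*r \<le> setdist (ball (d s) r) (ball (d t) r)" by (rule setdist_balls[OF rpos])
      ultimately show ?thesis using U'2 sv 3 by (simp add: b'_def)
    qed
  qed
  have H9: "\<forall>k. odd k \<and> k < 2*Suc n \<longrightarrow>
           (\<forall>s\<in>Iset a' k. \<forall>t\<in>Iset a' k.
              U' s \<subseteq> U' (Phi Psi a' k) \<and> \<not> U' t \<subseteq> U' (Phi Psi a' k) \<longrightarrow>
              (\<forall>p\<in>{1..a' (k+1)}. \<forall>q\<in>{1..a' (k+1)}. p \<noteq> q \<longrightarrow>
                 setdist (U' (s @ [p])) (U' (s @ [q]))
                   > diameter (\<Union>r\<in>{1..a' (k+1)}. U' (t @ [r]))))"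
  proof (intro allI impI ballI)
    fix k s t p q
    assume k: "odd k \<and> k < 2*Suc n" and s: "s \<in> Iset a' k" and t: "t \<in> Iset a' k"
      and st: "U' s \<subseteq> U' (Phi Psi a' k) \<and> \<not> U' t \<subseteq> U' (Phi Psi a' k)"
      and p: "p \<in> {1..a' (k+1)}" and q: "q \<in> {1..a' (k+1)}" and pq: "p \<noteq> q"
    have k1: "1 \<le> k" using k by (cases k) auto
    have "k < 2*n \<or> k = Suc (2*n)" using k by presburger
    then show "setdist (U' (s @ [p])) (U' (s @ [q])) > diameter (\<Union>r\<in>{1..a' (k+1)}. U' (t @ [r]))"
    proof
      assume k2: "k < 2*n"
      have sa: "s \<in> Iset a k" "t \<in> Iset a k" using s t Iseq k2 by simp_all
      have ls: "length s = k" "length t = k" using sa Iset_length by blast+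
      have Pheq: "Phi Psi a' k = Phi Psi a k" by (rule Phi_cong) (use k2 in \<open>simp add: a'eq\<close>)
      have PL: "length (Phi Psi a k) \<le> k" "Phi Psi a k \<noteq> []" using Phi_len[OF k1] by auto
      have "1 \<le> length (Phi Psi a k)" using PL(2) by (cases "Phi Psi a k") auto
      moreover have "length (Phi Psi a k) \<le> 2*n" using PL(1) k2 by simp
      ultimately have UPh: "U' (Phi Psi a k) = U (Phi Psi a k)" using U'old by blast
      have a'k: "a' (k+1) = a (k+1)" using k2 by (simp add: a'eq)
      have Us: "U' s = U s" "U' t = U t" using U'old ls k1 k2 by auto
      have Usp: "U' (s @ [p]) = U (s @ [p])" "U' (s @ [q]) = U (s @ [q])" using U'old ls k2 by auto
      have Uun: "(\<Union>r\<in>{1..a' (k+1)}. U' (t @ [r])) = (\<Union>r\<in>{1..a (k+1)}. U (t @ [r]))"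
        using U'old ls k2 a'k by auto
      have st': "U s \<subseteq> U (Phi Psi a k) \<and> \<not> U t \<subseteq> U (Phi Psi a k)" using st Pheq UPh Us by simp
      have pq': "p \<in> {1..a (k+1)}" "q \<in> {1..a (k+1)}" using p q a'k by auto
      have "setdist (U (s @ [p])) (U (s @ [q])) > diameter (\<Union>r\<in>{1..a (k+1)}. U (t @ [r]))"
        using c5 k k2 sa st' pq' pq by blast
      then show ?thesis using Usp Uun by simp
    next
      assume k2: "k = Suc (2*n)"
      have su: "s \<in> I1" "t \<in> I1" using s t k2 by (simp_all add: I1_def)
      have PhE: "Phi Psi a' k = Ph" using k2 by (simp add: Ph_def)
      have sS: "s \<in> S" "t \<notin> S" using Sdef' su st PhE by auto
      have pqB: "p \<in> {1..B}" "q \<in> {1..B}" using p q k2 a'2 by auto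
      have v: "s @ [p] \<in> I2" "s @ [q] \<in> I2" using I2snoc su pqB by blast+
      have vS: "s @ [p] \<in> SL" "s @ [q] \<in> SL" using v sS by (auto simp: SL_def)
      have "m < dist (d1 (s @ [p])) (d1 (s @ [q]))" using msep vS pq by blast
      then have md: "m < dist (d (s @ [p])) (d (s @ [q]))" using sS by (simp add: d_def)
      have "dist (d (s @ [p])) (d (s @ [q])) - 2*r \<le> setdist (ball (d (s @ [p])) r) (ball (d (s @ [q])) r)"
        by (rule setdist_balls[OF rpos])
      then have sd: "3*m/4 < setdist (U' (s @ [p])) (U' (s @ [q]))" using md rm U'2 v by (simp; linarith)
      have "(\<Union>r'\<in>{1..a' (k+1)}. U' (t @ [r'])) \<subseteq> ball (c t) (\<rho> + r)"
      proof (intro UN_least subsetI)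
        fix r' y assume r': "r' \<in> {1..a' (k+1)}" and y: "y \<in> U' (t @ [r'])"
        have w: "t @ [r'] \<in> I2" using I2snoc su r' k2 a'2 by auto
        have "dist (c t) (d (t @ [r'])) < \<rho>" using dT w sS by force
        moreover have "dist (d (t @ [r'])) y < r" using y U'2 w by simp
        moreover have "dist (c t) y \<le> dist (c t) (d (t @ [r'])) + dist (d (t @ [r'])) y" by (rule dist_triangle)
        ultimately have "dist (c t) y < \<rho> + r" by linarith
        then show "y \<in> ball (c t) (\<rho> + r)" by simp
      qed
      then have "diameter (\<Union>r'\<in>{1..a' (k+1)}. U' (t @ [r'])) \<le> 2*(\<rho> + r)"
        using diameter_in_ball \<rho>pos rpos by (metis add_pos_pos)
      moreover have "\<rho> \<le> m/8" by (simp add: \<rho>_def)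
      ultimately show ?thesis using sd rm mpos by (simp; linarith)
    qed
  qed
  have bal': "balanced Psi (Suc n) a' U'"
    unfolding balanced_def
    by (intro disjI2 conjI exI[of _ b'] H1 H2 H3 H4 H5 H6 H7 H8 H9)
  show ?thesis using bal' cons sub by blast
qed

end
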